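(* Let $E,F$ be Banach spaces, $a\in E$, $1\le p<\infty$, and $f:E\to F$. Suppose there exist $C,\delta,r>0$ such that \[ \Vert(f(a+x_{j})-f(a))_{j=1}^{k}\Vert_{w,1}\leq C\Vert(x_{j})_{j=1}^{k}\Vert_{w,p}^{r} \] for every $k\in\mathbb{N}$ and all $x_{1},\dots,x_{k}\in E$ with $\Vert(x_{j})_{j=1}^{k}\Vert_{w,p}<\delta$. Then $f$ is almost $p$-summing at $a$.
   Context: For a finite sequence $(y_j)_{j=1}^k$ in a Banach space $X$ and $1\le s<\infty$, $\Vert(y_{j})_{j=1}^k\Vert_{w,s}:=\sup_{\varphi\in B_{X'}}(\sum_{j=1}^k|\varphi(y_{j})|^{s})^{1/s}$. With $(r_j)$ the Rademacher functions, $f$ is almost $p$-summing at $a$ if there exist $C_a,\epsilon_a,r_a>0$ with $(\int_{0}^{1}\Vert\sum_{j=1}^{k}(f(a+x_{j})-f(a))r_{j}(t)\Vert^{2}dt)^{1/2}\leq C_{a}\Vert(x_{j})_{j=1}^{k}\Vert_{w,p}^{r_{a}}$ for all $k$ and $x_1,\dots,x_k\in E$ with $\Vert(x_{j})_{j=1}^{k}\Vert_{w,p}<\epsilon_{a}$. *)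

theory Defs
  imports "HOL-Analysis.Analysis"
begin

definition rademacher :: "nat \<Rightarrow> real \<Rightarrow> real" where
  "rademacher n t = sgn (sin (2 ^ n * pi * t))"

definition weak_norm :: "real \<Rightarrow> nat \<Rightarrow> (nat \<Rightarrow> 'a::real_normed_vector) \<Rightarrow> real" where
  "weak_norm s k y =
     (SUP \<phi> \<in> {\<phi> :: 'a \<Rightarrow> real. bounded_linear \<phi> \<and> onorm \<phi> \<le> 1}.
        (\<Sum>j = 1..k. \<bar>\<phi> (y j)\<bar> powr s) powr (1 / s))"

definition almost_p_summing_at ::
  "real \<Rightarrow> ('a::real_normed_vector \<Rightarrow> 'b::real_normed_vector) \<Rightarrow> 'a \<Rightarrow> bool" where
  "almost_p_summing_at p f a \<longleftrightarrow>
     (\<exists>C \<epsilon> r. C > 0 \<and> \<epsilon> > 0 \<and> r > 0 \<and>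
        (\<forall>k (x :: nat \<Rightarrow> 'a). weak_norm p k x < \<epsilon> \<longrightarrow>
           sqrt (integral {0..1}
                   (\<lambda>t. (norm (\<Sum>j = 1..k. rademacher j t *\<^sub>R (f (a + x j) - f a)))\<^sup>2))
             \<le> C * weak_norm p k x powr r))"

end

theory Submission imports Defs begin

definition hbg :: "'b::real_normed_vector \<Rightarrow> ('b \<times> real) set \<Rightarrow> bool" where
 "hbg y0 H \<longleftrightarrow> (y0, norm y0) \<in> H \<and> (\<forall>x a b. (x,a)\<in>H \<longrightarrow> (x,b)\<in>H \<longrightarrow> a=b)
   \<and> (\<forall>x a z b. (x,a)\<in>H \<longrightarrow> (z,b)\<in>H \<longrightarrow> (x+z,a+b)\<in>H)
   \<and> (\<forall>x a c. (x,a)\<in>H \<longrightarrow> (c *\<^sub>R x, c*a)\<in>H) \<and> (\<forall>x a. (x,a)\<in>H \<longrightarrow> a \<le> norm x)"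

lemma hbg_init: "hbg y0 {(t *\<^sub>R y0, t * norm y0) | t. True}"
proof -
  have "t * norm y0 \<le> norm (t *\<^sub>R y0)" for t
    by (simp add: mult_right_mono)
  moreover have "t * norm y0 = s * norm y0" if "t *\<^sub>R y0 = s *\<^sub>R y0" for t s
    using that by (cases "y0 = 0") auto
  ultimately show ?thesis unfolding hbg_def
  proof (intro conjI allI impI)
    show "(y0, norm y0) \<in> {(t *\<^sub>R y0, t * norm y0) | t. True}"
      by (rule CollectI, rule exI[of _ 1]) simp
  next
    fix x a z b
    assume "(x,a) \<in> {(t *\<^sub>R y0, t * norm y0) | t. True}" "(z,b) \<in> {(t *\<^sub>R y0, t * norm y0) | t. True}"
    then obtain t s where "x = t *\<^sub>R y0" "a = t * norm y0" "z = s *\<^sub>R y0" "b = s * norm y0" by blast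
    then show "(x+z,a+b) \<in> {(t *\<^sub>R y0, t * norm y0) | t. True}"
      by (intro CollectI exI[of _ "t+s"]) (simp add: scaleR_add_left distrib_right)
  next
    fix x a c
    assume "(x,a) \<in> {(t *\<^sub>R y0, t * norm y0) | t. True}"
    then obtain t where "x = t *\<^sub>R y0" "a = t * norm y0" by blast
    then show "(c *\<^sub>R x, c*a) \<in> {(t *\<^sub>R y0, t * norm y0) | t. True}"
      by (intro CollectI exI[of _ "c*t"]) simp
  qed blast+
qed

lemma hbg_chain:
  assumes C: "C \<in> chains {H. hbg y0 H}" and ne: "C \<noteq> {}"
  shows "hbg y0 (\<Union>C)"
proof -
  have hC: "\<And>H. H \<in> C \<Longrightarrow> hbg y0 H" using chainsD2[OF C] by auto
  have two: "\<exists>H\<in>C. p \<in> H \<and> q \<in> H" if pq: "p \<in> \<Union>C" "q \<in> \<Union>C" for p q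
  proof -
    obtain H1 H2 where "H1 \<in> C" "H2 \<in> C" "p \<in> H1" "q \<in> H2" using pq by auto
    then show ?thesis using chainsD[OF C, of H1 H2] by blast
  qed
  show ?thesis unfolding hbg_def
  proof (intro conjI allI impI)
    show "(y0, norm y0) \<in> \<Union>C" using ne hC hbg_def by fastforce
  next
    fix x a b assume "(x,a) \<in> \<Union>C" "(x,b) \<in> \<Union>C"
    then obtain H where "H \<in> C" "(x,a) \<in> H" "(x,b) \<in> H" using two by blast
    then show "a = b" using hC unfolding hbg_def by blast
  next
    fix x a z b assume "(x,a) \<in> \<Union>C" "(z,b) \<in> \<Union>C"
    then obtain H where "H \<in> C" "(x,a) \<in> H" "(z,b) \<in> H" using two by blast
    then show "(x+z,a+b) \<in> \<Union>C" using hC unfolding hbg_def by blast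
  next
    fix x a c assume "(x,a) \<in> \<Union>C"
    then obtain H where "H \<in> C" "(x,a) \<in> H" by blast
    then show "(c *\<^sub>R x, c*a) \<in> \<Union>C" using hC unfolding hbg_def by blast
  next
    fix x a assume "(x,a) \<in> \<Union>C"
    then obtain H where "H \<in> C" "(x,a) \<in> H" by blast
    then show "a \<le> norm x" using hC unfolding hbg_def by blast
  qed
qed

lemma hbg_extend:
  assumes H: "hbg y0 H" and z: "z \<notin> fst ` H"
  shows "\<exists>H'. hbg y0 H' \<and> H \<subseteq> H' \<and> H' \<noteq> H"
proof -
  have fnH: "\<And>x a b. (x,a)\<in>H \<Longrightarrow> (x,b)\<in>H \<Longrightarrow> a=b"
   and add: "\<And>x a w b. (x,a)\<in>H \<Longrightarrow> (w,b)\<in>H \<Longrightarrow> (x+w,a+b)\<in>H"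
   and scl: "\<And>x a c. (x,a)\<in>H \<Longrightarrow> (c *\<^sub>R x, c*a)\<in>H"
   and bnd: "\<And>x a. (x,a)\<in>H \<Longrightarrow> a \<le> norm x"
   and y0: "(y0, norm y0) \<in> H" using H unfolding hbg_def by blast+
  define S where "S = {b - norm (y - z) | y b. (y,b) \<in> H}"
  define c where "c = Sup S"
  have Sne: "S \<noteq> {}" using y0 S_def by blast
  have key: "b - norm (y - z) \<le> norm (x + z) - a" if "(x,a)\<in>H" "(y,b)\<in>H" for x a y b
  proof -
    have "a + b \<le> norm (x + y)" using bnd[OF add[OF that]] .
    also have "\<dots> \<le> norm (x + z) + norm (y - z)"
      using norm_triangle_ineq[of "x+z" "y-z"] by (simp add: algebra_simps)
    finally show ?thesis by simp
  qed
  have c_up: "b - norm (y - z) \<le> c" if "(y,b)\<in>H" for y b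
    unfolding c_def
  proof (rule cSup_upper)
    show "b - norm (y - z) \<in> S" using that S_def by blast
    show "bdd_above S" unfolding bdd_above_def S_def using key[OF y0] by blast
  qed
  have c_lo: "c \<le> norm (x + z) - a" if "(x,a)\<in>H" for x a
    unfolding c_def using Sne by (rule cSup_least) (auto simp: S_def intro: key[OF that])
  define H' where "H' = {(x + t *\<^sub>R z, a + t * c) | x a t. (x,a) \<in> H}"
  have sub: "H \<subseteq> H'" unfolding H'_def by force
  have zin: "(z, c) \<in> H'"
  proof -
    have "(0, 0) \<in> H" using scl[OF y0, of 0] by simp
    then show ?thesis unfolding H'_def by (rule_tac CollectI, rule_tac x=0 in exI, rule_tac x=0 in exI, rule_tac x=1 in exI) auto
  qed
  have ne: "H' \<noteq> H" using zin z by force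
  have "hbg y0 H'" unfolding hbg_def
  proof (intro conjI allI impI)
    show "(y0, norm y0) \<in> H'" using sub y0 by blast
  next
    fix v a b assume "(v,a)\<in>H'" "(v,b)\<in>H'"
    then obtain x a0 t x' a0' t' where h: "(x,a0)\<in>H" "(x',a0')\<in>H" "v = x + t *\<^sub>R z" "a = a0 + t*c"
      "v = x' + t' *\<^sub>R z" "b = a0' + t'*c" unfolding H'_def by blast
    show "a = b"
    proof (cases "t = t'")
      case True
      then have "x = x'" using h by simp
      then show ?thesis using fnH h True by blast
    next
      case False
      have "(t' - t) *\<^sub>R z = x - x'" using h by (simp add: algebra_simps)
      then have "(1/(t'-t)) *\<^sub>R ((t' - t) *\<^sub>R z) = (1/(t'-t)) *\<^sub>R (x - x')" by simp
      then have "z = (1/(t'-t)) *\<^sub>R (x + (-1) *\<^sub>R x')" using False by simp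
      moreover have "(x + (-1) *\<^sub>R x', a0 + (-1)*a0') \<in> H" using add[OF h(1) scl[OF h(2)]] .
      ultimately have "(z, (1/(t'-t)) * (a0 + (-1)*a0')) \<in> H" using scl by metis
      then show ?thesis using z by force
    qed
  next
    fix v a w b assume "(v,a)\<in>H'" "(w,b)\<in>H'"
    then obtain x a0 t x' a0' t' where h: "(x,a0)\<in>H" "(x',a0')\<in>H" "v = x + t *\<^sub>R z" "a = a0 + t*c"
      "w = x' + t' *\<^sub>R z" "b = a0' + t'*c" unfolding H'_def by blast
    have "v + w = (x + x') + (t + t') *\<^sub>R z" "a + b = (a0 + a0') + (t+t')*c"
      using h by (simp_all add: algebra_simps)
    then show "(v + w, a + b) \<in> H'" unfolding H'_def using add[OF h(1,2)] by blast
  next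
    fix v a s assume "(v,a)\<in>H'"
    then obtain x a0 t where h: "(x,a0)\<in>H" "v = x + t *\<^sub>R z" "a = a0 + t*c" unfolding H'_def by blast
    have "s *\<^sub>R v = s *\<^sub>R x + (s*t) *\<^sub>R z" "s * a = s*a0 + (s*t)*c"
      using h by (simp_all add: algebra_simps)
    then show "(s *\<^sub>R v, s * a) \<in> H'" unfolding H'_def using scl[OF h(1)] by blast
  next
    fix v a assume "(v,a)\<in>H'"
    then obtain x a0 t where h: "(x,a0)\<in>H" "v = x + t *\<^sub>R z" "a = a0 + t*c" unfolding H'_def by blast
    show "a \<le> norm v"
    proof (cases t "0::real" rule: linorder_cases)
      case equal then show ?thesis using h bnd by simp
    next
      case greater
      have "c \<le> norm ((1/t) *\<^sub>R x + z) - (1/t)*a0" using c_lo[OF scl[OF h(1)]] .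
      then have "t * c \<le> t * (norm ((1/t) *\<^sub>R x + z) - (1/t)*a0)" using greater by (simp add: mult_left_mono)
      also have "t * (norm ((1/t) *\<^sub>R x + z) - (1/t)*a0) = norm v - a0"
      proof -
        have vw: "v = t *\<^sub>R ((1/t) *\<^sub>R x + z)" using greater h by (simp add: algebra_simps)
        have "norm v = t * norm ((1/t) *\<^sub>R x + z)" using vw greater by simp
        then show ?thesis using greater by (simp add: algebra_simps)
      qed
      finally show ?thesis using h by simp
    next
      case less
      define s where "s = -t"
      have s: "s > 0" using less s_def by simp
      have "(1/s)*a0 - norm ((1/s) *\<^sub>R x - z) \<le> c" using c_up[OF scl[OF h(1)]] .
      then have "s * ((1/s)*a0 - norm ((1/s) *\<^sub>R x - z)) \<le> s * c" using s by (simp add: mult_left_mono)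
      also have "s * ((1/s)*a0 - norm ((1/s) *\<^sub>R x - z)) = a0 - norm v"
      proof -
        have vw: "v = s *\<^sub>R ((1/s) *\<^sub>R x - z)" using s h s_def by (simp add: algebra_simps)
        have "norm v = s * norm ((1/s) *\<^sub>R x - z)" using vw s by simp
        then show ?thesis using s by (simp add: algebra_simps)
      qed
      finally show ?thesis using h s_def by simp
    qed
  qed
  then show ?thesis using sub ne by blast
qed

lemma hahn_banach_norm:
  fixes y0 :: "'b::real_normed_vector"
  shows "\<exists>\<phi>. bounded_linear \<phi> \<and> onorm \<phi> \<le> 1 \<and> \<phi> y0 = norm y0"
proof -
  have "\<exists>M\<in>{H. hbg y0 H}. \<forall>X\<in>{H. hbg y0 H}. M \<subseteq> X \<longrightarrow> X = M"
  proof (rule Zorn_Lemma2, intro ballI)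
    fix C assume C: "C \<in> chains {H. hbg y0 H}"
    show "\<exists>U\<in>{H. hbg y0 H}. \<forall>X\<in>C. X \<subseteq> U"
    proof (cases "C = {}")
      case True then show ?thesis using hbg_init by blast
    next
      case False then show ?thesis using hbg_chain[OF C] by blast
    qed
  qed
  then obtain H where H: "hbg y0 H" and max: "\<And>X. hbg y0 X \<Longrightarrow> H \<subseteq> X \<Longrightarrow> X = H" by blast
  have fnH: "\<And>x a b. (x,a)\<in>H \<Longrightarrow> (x,b)\<in>H \<Longrightarrow> a=b"
   and add: "\<And>x a w b. (x,a)\<in>H \<Longrightarrow> (w,b)\<in>H \<Longrightarrow> (x+w,a+b)\<in>H"
   and scl: "\<And>x a c. (x,a)\<in>H \<Longrightarrow> (c *\<^sub>R x, c*a)\<in>H"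
   and bnd: "\<And>x a. (x,a)\<in>H \<Longrightarrow> a \<le> norm x"
   and y0: "(y0, norm y0) \<in> H" using H unfolding hbg_def by blast+
  have dom: "\<exists>a. (x,a) \<in> H" for x
  proof (rule ccontr)
    assume "\<not> ?thesis"
    then have "x \<notin> fst ` H" by force
    then show False using hbg_extend[OF H] max by blast
  qed
  define \<phi> where "\<phi> x = (THE a. (x,a) \<in> H)" for x
  have phi: "(x, \<phi> x) \<in> H" for x
    unfolding \<phi>_def using dom[of x] fnH by (metis theI)
  have phi_eq: "\<phi> x = a" if "(x,a) \<in> H" for x a using fnH[OF that phi] by simp
  have lin_add: "\<phi> (x + y) = \<phi> x + \<phi> y" for x y using phi_eq[OF add[OF phi phi]] .
  have lin_scl: "\<phi> (c *\<^sub>R x) = c *\<^sub>R \<phi> x" for c x using phi_eq[OF scl[OF phi]] by simp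
  have nb: "norm (\<phi> x) \<le> 1 * norm x" for x
  proof -
    have "\<phi> x \<le> norm x" using bnd[OF phi] .
    moreover have "- \<phi> x \<le> norm x" using bnd[OF phi, of "(-1) *\<^sub>R x"] lin_scl[of "-1" x] by simp
    ultimately show ?thesis by simp
  qed
  have bl: "bounded_linear \<phi>"
    by (rule bounded_linear_intro[where K=1]) (use lin_add lin_scl nb in auto)
  have "onorm \<phi> \<le> 1" by (rule onorm_bound) (use nb in simp_all)
  moreover have "\<phi> y0 = norm y0" using phi_eq[OF y0] .
  ultimately show ?thesis using bl by blast
qed

lemma norm_le_weak1:
  fixes y :: "nat \<Rightarrow> 'b::real_normed_vector"
  assumes c: "\<And>j. \<bar>c j\<bar> \<le> 1"
  shows "norm (\<Sum>j = 1..k. c j *\<^sub>R y j) \<le> weak_norm 1 k y"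
proof -
  define v where "v = (\<Sum>j = 1..k. c j *\<^sub>R y j)"
  obtain \<phi> :: "'b \<Rightarrow> real" where bl: "bounded_linear \<phi>" and on: "onorm \<phi> \<le> 1" and pv: "\<phi> v = norm v"
    using hahn_banach_norm by blast
  let ?B = "{\<phi> :: 'b \<Rightarrow> real. bounded_linear \<phi> \<and> onorm \<phi> \<le> 1}"
  let ?g = "\<lambda>\<phi>. (\<Sum>j = 1..k. \<bar>\<phi> (y j)\<bar> powr 1) powr (1 / 1)"
  have g_eq: "?g \<psi> = (\<Sum>j = 1..k. \<bar>\<psi> (y j)\<bar>)" for \<psi> :: "'b \<Rightarrow> real"
    by (simp add: sum_nonneg)
  have bdd: "bdd_above (?g ` ?B)"
  proof (rule bdd_aboveI2)
    fix \<psi> assume "\<psi> \<in> ?B"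
    then have "\<bar>\<psi> (y j)\<bar> \<le> norm (y j)" for j
      using onorm[of \<psi> "y j"] mult_right_mono[of "onorm \<psi>" 1 "norm (y j)"] by auto
    then show "?g \<psi> \<le> (\<Sum>j = 1..k. norm (y j))" unfolding g_eq by (intro sum_mono) auto
  qed
  interpret bounded_linear \<phi> by (rule bl)
  have "norm v = (\<Sum>j = 1..k. c j * \<phi> (y j))" using pv unfolding v_def by (simp add: sum scale)
  also have "\<dots> \<le> (\<Sum>j = 1..k. \<bar>\<phi> (y j)\<bar>)"
  proof (intro sum_mono)
    fix j
    have "c j * \<phi> (y j) \<le> \<bar>c j * \<phi> (y j)\<bar>" by simp
    also have "\<dots> = \<bar>c j\<bar> * \<bar>\<phi> (y j)\<bar>" by (simp add: abs_mult)
    also have "\<dots> \<le> 1 * \<bar>\<phi> (y j)\<bar>" using c by (intro mult_right_mono) auto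
    finally show "c j * \<phi> (y j) \<le> \<bar>\<phi> (y j)\<bar>" by simp
  qed
  also have "\<dots> = ?g \<phi>" using g_eq by simp
  also have "\<dots> \<le> weak_norm 1 k y" unfolding weak_norm_def
    by (rule cSUP_upper) (use bl on bdd in auto)
  finally show ?thesis unfolding v_def .
qed

lemma abs_rademacher: "\<bar>rademacher j t\<bar> \<le> 1"
  unfolding rademacher_def by (simp add: sgn_real_def)

theorem mainTheorem8:
  fixes f :: "'a::banach \<Rightarrow> 'b::banach" and a :: 'a and p :: real
  assumes "1 \<le> p"
    and "\<exists>C \<delta> r. C > 0 \<and> \<delta> > 0 \<and> r > 0 \<and>
           (\<forall>k (x :: nat \<Rightarrow> 'a). weak_norm p k x < \<delta> \<longrightarrow>
              weak_norm 1 k (\<lambda>j. f (a + x j) - f a) \<le> C * weak_norm p k x powr r)"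
  shows "almost_p_summing_at p f a"
proof -
  obtain C \<delta> r where C: "C > 0" "\<delta> > 0" "r > 0" and H: "\<And>k (x :: nat \<Rightarrow> 'a). weak_norm p k x < \<delta> \<Longrightarrow>
              weak_norm 1 k (\<lambda>j. f (a + x j) - f a) \<le> C * weak_norm p k x powr r"
    using assms(2) by blast
  have "sqrt (integral {0..1}
                   (\<lambda>t. (norm (\<Sum>j = 1..k. rademacher j t *\<^sub>R (f (a + x j) - f a)))\<^sup>2))
             \<le> C * weak_norm p k x powr r" if lt: "weak_norm p k x < \<delta>" for k and x :: "nat \<Rightarrow> 'a"
  proof -
    define y where "y j = f (a + x j) - f a" for j
    define W where "W = weak_norm 1 k y"
    have pt: "norm (\<Sum>j = 1..k. rademacher j t *\<^sub>R y j) \<le> W" for t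
      unfolding W_def by (rule norm_le_weak1) (rule abs_rademacher)
    have W0: "0 \<le> W" using pt[of 0] norm_ge_zero order_trans by blast
    have sq: "(norm (\<Sum>j = 1..k. rademacher j t *\<^sub>R y j))\<^sup>2 \<le> W\<^sup>2" for t
      using pt[of t] by (intro power_mono) auto
    have I: "integral {0..1} (\<lambda>t. (norm (\<Sum>j = 1..k. rademacher j t *\<^sub>R y j))\<^sup>2) \<le> W\<^sup>2"
    proof (cases "(\<lambda>t. (norm (\<Sum>j = 1..k. rademacher j t *\<^sub>R y j))\<^sup>2) integrable_on {0..1::real}")
      case True
      have "integral {0..1} (\<lambda>t. (norm (\<Sum>j = 1..k. rademacher j t *\<^sub>R y j))\<^sup>2)
            \<le> integral {0..1::real} (\<lambda>t. W\<^sup>2)"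
        by (rule integral_le[OF True]) (use sq in auto)
      also have "\<dots> = W\<^sup>2" by simp
      finally show ?thesis .
    next
      case False
      then show ?thesis by (simp only: not_integrable_integral[OF False]) simp
    qed
    have "sqrt (integral {0..1} (\<lambda>t. (norm (\<Sum>j = 1..k. rademacher j t *\<^sub>R y j))\<^sup>2)) \<le> sqrt (W\<^sup>2)"
      using I by (rule real_sqrt_le_mono)
    also have "\<dots> = W" using W0 by simp
    also have "\<dots> \<le> C * weak_norm p k x powr r" unfolding W_def y_def using H[OF lt] .
    finally show ?thesis unfolding y_def .
  qed
  then show ?thesis unfolding almost_p_summing_at_def using C by blast
qed

end
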